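(* Let $\mathbf M$ be the Wright–Fisher matrix and $\phi(x)=x\log x$ (with $\phi(0)=0$). For every $\mathbf p\in\Delta^N$ with $\langle\mathbf u^{(1)},\mathbf p\rangle>0$, one has $E(\mathbf M\mathbf p)\le E(\mathbf p)$; consequently $n\mapsto E(\mathbf M^n\mathbf p)$ is non-increasing.
   Context: Fix $N\ge2$ and $(\mathsf s_0,\dots,\mathsf s_N)$ with $\mathsf s_0=0$, $\mathsf s_N=1$ and $0<\mathsf s_j<1$ for $1\le j\le N-1$. The Wright–Fisher matrix is $\mathbf M=(M_{ij})_{i,j=0}^N$ with $M_{ij}=\binom Ni\mathsf s_j^{\,i}(1-\mathsf s_j)^{N-i}$ (column-stochastic; probability vectors evolve by $\mathbf p\mapsto\mathbf M\mathbf p$). Its core $(M_{ij})_{i,j=1}^{N-1}$ is a positive matrix; let $\mu_1>0$ be its Perron eigenvalue and $\mathbf u^{(1)}=(u^{(1)}_i)_{i=1}^{N-1}$, $\mathbf v^{(1)}=(v^{(1)}_i)_{i=1}^{N-1}$ its positive left and right Perron eigenvectors, normalized by $\sum_iv^{(1)}_i=1$, $\sum_iu^{(1)}_iv^{(1)}_i=1$. Let $\Delta^N=\{\mathbf x\in\mathbb R^{N+1}:x_i\ge0,\sum_ix_i=1\}$, $\langle\mathbf u^{(1)},\mathbf p\rangle=\sum_{i=1}^{N-1}u^{(1)}_ip_i$, and for $\langle\mathbf u^{(1)},\mathbf p\rangle>0$, $E(\mathbf p)=\sum_{i=1}^{N-1}\phi\!\left(\frac{p_i}{v^{(1)}_i\langle\mathbf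 u^{(1)},\mathbf p\rangle}\right)v^{(1)}_iu^{(1)}_i$. *)

theory Defs
  imports Complex_Main
begin

text \<open>Vectors indexed by 0..N are represented as functions nat => real; only
  indices 0..N are relevant.\<close>

definition WF_entry :: "nat \<Rightarrow> (nat \<Rightarrow> real) \<Rightarrow> nat \<Rightarrow> nat \<Rightarrow> real" where
  "WF_entry N s i j = real (N choose i) * s j ^ i * (1 - s j) ^ (N - i)"

definition WF_apply :: "nat \<Rightarrow> (nat \<Rightarrow> real) \<Rightarrow> (nat \<Rightarrow> real) \<Rightarrow> (nat \<Rightarrow> real)" where
  "WF_apply N s p = (\<lambda>i. \<Sum>j = 0..N. WF_entry N s i j * p j)"

definition phi :: "real \<Rightarrow> real" where
  "phi x = (if x = 0 then 0 else x * ln x)"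

definition simplex :: "nat \<Rightarrow> (nat \<Rightarrow> real) set" where
  "simplex N = {p. (\<forall>i\<le>N. 0 \<le> p i) \<and> (\<Sum>i = 0..N. p i) = 1}"

definition upair :: "nat \<Rightarrow> (nat \<Rightarrow> real) \<Rightarrow> (nat \<Rightarrow> real) \<Rightarrow> real" where
  "upair N u p = (\<Sum>i = 1..N-1. u i * p i)"

definition Efun :: "nat \<Rightarrow> (nat \<Rightarrow> real) \<Rightarrow> (nat \<Rightarrow> real) \<Rightarrow> (nat \<Rightarrow> real) \<Rightarrow> real" where
  "Efun N u v p = (\<Sum>i = 1..N-1. phi (p i / (v i * upair N u p)) * v i * u i)"

end

theory Submission
  imports Defs "HOL-Analysis.Convex"
begin

lemma phi_convex: "convex_on {0..} phi"
proof (rule convex_on_linorderI)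
  show "convex {0::real..}" by simp
  fix t x y :: real assume t: "0 < t" "t < 1" and xy: "x \<in> {0..}" "y \<in> {0..}" "x < y"
  show "phi ((1 - t) *\<^sub>R x + t *\<^sub>R y) \<le> (1 - t) * phi x + t * phi y"
  proof (cases "x = 0")
    case True
    have y: "y > 0" using xy True by auto
    have "ln t < 0" using t by simp
    hence "t * y * ln t \<le> 0" using t y by (simp add: mult_nonpos_nonneg mult_nonneg_nonpos)
    moreover have "ln (t*y) = ln t + ln y" using t y by (simp add: ln_mult)
    ultimately show ?thesis using True t y by (simp add: phi_def algebra_simps)
  next
    case False
    have c: "convex_on {0<..} phi"
    proof (rule convex_on_realI[where f'="\<lambda>x. ln x + 1"])
      show "connected {0::real<..}" by simp
      fix x :: real assume "x \<in> {0<..}"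
      hence x: "x > 0" by simp
      have "((\<lambda>x. x * ln x) has_real_derivative (ln x + 1)) (at x)"
        using x by (auto intro!: derivative_eq_intros)
      moreover have "\<forall>\<^sub>F z in nhds x. phi z = z * ln z"
        using eventually_nhds_in_open[of "{0<..}" x] x
        by (auto elim!: eventually_mono simp: phi_def)
      ultimately show "(phi has_real_derivative (ln x + 1)) (at x)"
        using has_field_derivative_transform_within_open[of "\<lambda>x. x * ln x" "ln x + 1" x "{0<..}" phi] x
        by (simp add: phi_def)
    next
      fix x y :: real assume "x \<in> {0<..}" "y \<in> {0<..}" "x \<le> y"
      thus "ln x + 1 \<le> ln y + 1" by simp
    qed
    show ?thesis using convex_onD[OF c, of t x y] t xy False by auto
  qed
qed

lemma step:
  fixes N :: nat and s u v p :: "nat \<Rightarrow> real" and mu :: real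
  assumes N2: "N \<ge> 2"
    and s0: "s 0 = 0" and sN: "s N = 1"
    and sint: "\<forall>j. 1 \<le> j \<and> j \<le> N - 1 \<longrightarrow> 0 < s j \<and> s j < 1"
    and mu_pos: "mu > 0"
    and u_pos: "\<forall>i. 1 \<le> i \<and> i \<le> N - 1 \<longrightarrow> u i > 0"
    and v_pos: "\<forall>i. 1 \<le> i \<and> i \<le> N - 1 \<longrightarrow> v i > 0"
    and u_left: "\<forall>j. 1 \<le> j \<and> j \<le> N - 1 \<longrightarrow>
                   (\<Sum>i = 1..N-1. u i * WF_entry N s i j) = mu * u j"
    and v_right: "\<forall>i. 1 \<le> i \<and> i \<le> N - 1 \<longrightarrow>
                   (\<Sum>j = 1..N-1. WF_entry N s i j * v j) = mu * v i"
    and p_nn: "\<forall>i\<le>N. 0 \<le> p i"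
    and p_pos: "upair N u p > 0"
  shows "Efun N u v (WF_apply N s p) \<le> Efun N u v p"
    and "\<forall>i\<le>N. 0 \<le> WF_apply N s p i"
    and "upair N u (WF_apply N s p) = mu * upair N u p"
proof -
  define I where "I = {1..N-1}"
  define A where "A = WF_entry N s"
  have finI: "finite I" and neI: "I \<noteq> {}" using N2 by (auto simp: I_def)
  have s01: "0 \<le> s j \<and> s j \<le> 1" if "j \<le> N" for j
  proof (cases "j = 0 \<or> j = N")
    case True thus ?thesis using s0 sN by auto
  next
    case False
    hence "1 \<le> j \<and> j \<le> N - 1" using that by auto
    thus ?thesis using sint by fastforce
  qed
  have Ann: "A i j \<ge> 0" if "j \<le> N" for i j
    using s01[OF that] by (simp add: A_def WF_entry_def)
  have core: "WF_apply N s p i = (\<Sum>j\<in>I. A i j * p j)" if i: "i \<in> I" for i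
  proof -
    have "{0..N} = insert 0 (insert N I)" using N2 by (auto simp: I_def)
    moreover have "A i 0 = 0" using i s0 by (simp add: A_def WF_entry_def I_def)
    moreover have "A i N = 0" using i sN N2 by (auto simp: A_def WF_entry_def I_def)
    moreover have "0 \<notin> I" "N \<notin> I" "0 \<noteq> N" using N2 by (auto simp: I_def)
    ultimately show ?thesis using finI by (simp add: WF_apply_def A_def)
  qed
  show nn: "\<forall>i\<le>N. 0 \<le> WF_apply N s p i"
    using Ann p_nn by (auto simp: WF_apply_def A_def intro!: sum_nonneg mult_nonneg_nonneg)
  have uI: "\<And>i. i \<in> I \<Longrightarrow> u i > 0" and vI: "\<And>i. i \<in> I \<Longrightarrow> v i > 0"
    using u_pos v_pos by (auto simp: I_def)
  have uleft: "\<And>j. j \<in> I \<Longrightarrow> (\<Sum>i\<in>I. u i * A i j) = mu * u j"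
    using u_left by (auto simp: I_def A_def)
  have vright: "\<And>i. i \<in> I \<Longrightarrow> (\<Sum>j\<in>I. A i j * v j) = mu * v i"
    using v_right by (auto simp: I_def A_def)
  have IN: "\<And>j. j \<in> I \<Longrightarrow> j \<le> N" by (auto simp: I_def)
  define c where "c = upair N u p"
  have cpos: "c > 0" using p_pos c_def by simp
  have up: "upair N u (WF_apply N s p) = mu * c"
  proof -
    have "upair N u (WF_apply N s p) = (\<Sum>i\<in>I. u i * (\<Sum>j\<in>I. A i j * p j))"
      unfolding upair_def I_def[symmetric] by (rule sum.cong) (simp_all add: core)
    also have "\<dots> = (\<Sum>j\<in>I. (\<Sum>i\<in>I. u i * A i j) * p j)"
      by (simp add: sum_distrib_left sum_distrib_right mult.assoc) (rule sum.swap)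
    also have "\<dots> = (\<Sum>j\<in>I. mu * (u j * p j))"
      by (rule sum.cong) (simp_all add: uleft)
    also have "\<dots> = mu * c" by (simp add: c_def upair_def I_def sum_distrib_left)
    finally show ?thesis .
  qed
  thus "upair N u (WF_apply N s p) = mu * upair N u p" by (simp add: c_def)
  define q where "q j = p j / (v j * c)" for j
  have qnn: "\<And>j. j \<in> I \<Longrightarrow> q j \<in> {0..}"
    using p_nn IN vI cpos by (auto simp: q_def intro!: divide_nonneg_pos)
  define w where "w i j = A i j * v j / (mu * v i)" for i j
  have key: "phi (WF_apply N s p i / (v i * upair N u (WF_apply N s p))) \<le> (\<Sum>j\<in>I. w i j * phi (q j))"
    if i: "i \<in> I" for i
  proof -
    have vi: "v i > 0" using vI i .
    have "WF_apply N s p i / (v i * upair N u (WF_apply N s p)) = (\<Sum>j\<in>I. A i j * p j) / (v i * (mu * c))"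
      by (simp add: core i up)
    also have "\<dots> = (\<Sum>j\<in>I. w i j *\<^sub>R q j)"
      unfolding sum_divide_distrib
    proof (rule sum.cong)
      fix j assume j: "j \<in> I"
      show "A i j * p j / (v i * (mu * c)) = w i j *\<^sub>R q j"
        using vI[OF j] vi mu_pos cpos by (simp add: w_def q_def field_simps)
    qed simp
    finally have eq: "WF_apply N s p i / (v i * upair N u (WF_apply N s p)) = (\<Sum>j\<in>I. w i j *\<^sub>R q j)" .
    have ws: "(\<Sum>j\<in>I. w i j) = 1"
    proof -
      have "(\<Sum>j\<in>I. w i j) = (\<Sum>j\<in>I. A i j * v j) / (mu * v i)"
        by (simp add: w_def sum_divide_distrib)
      also have "\<dots> = 1" using vright[OF i] vi mu_pos by simp
      finally show ?thesis .
    qed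
    have wnn: "\<And>j. j \<in> I \<Longrightarrow> w i j \<ge> 0"
    proof -
      fix j assume j: "j \<in> I"
      have "0 \<le> A i j * v j" using Ann[OF IN[OF j]] vI[OF j] by simp
      moreover have "0 < mu * v i" using vi mu_pos by simp
      ultimately show "w i j \<ge> 0" unfolding w_def by simp
    qed
    show ?thesis unfolding eq
      by (rule convex_on_sum[OF finI neI phi_convex ws wnn qnn])
  qed
  have "Efun N u v (WF_apply N s p) = (\<Sum>i\<in>I. phi (WF_apply N s p i / (v i * upair N u (WF_apply N s p))) * v i * u i)"
    by (simp add: Efun_def I_def)
  also have "\<dots> \<le> (\<Sum>i\<in>I. (\<Sum>j\<in>I. w i j * phi (q j)) * v i * u i)"
  proof (rule sum_mono)
    fix i assume i: "i \<in> I"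
    show "phi (WF_apply N s p i / (v i * upair N u (WF_apply N s p))) * v i * u i \<le> (\<Sum>j\<in>I. w i j * phi (q j)) * v i * u i"
      using key[OF i] vI[OF i] uI[OF i] by (simp add: mult_right_mono)
  qed
  also have "\<dots> = (\<Sum>i\<in>I. (\<Sum>j\<in>I. (u i * A i j) * (v j * phi (q j) / mu)))"
  proof (rule sum.cong[OF refl])
    fix i assume i: "i \<in> I"
    show "(\<Sum>j\<in>I. w i j * phi (q j)) * v i * u i = (\<Sum>j\<in>I. (u i * A i j) * (v j * phi (q j) / mu))"
      unfolding sum_distrib_right by (rule sum.cong[OF refl]) (use vI[OF i] mu_pos in \<open>simp add: w_def field_simps\<close>)
  qed
  also have "\<dots> = (\<Sum>j\<in>I. (\<Sum>i\<in>I. u i * A i j) * (v j * phi (q j) / mu))"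
    unfolding sum_distrib_right by (rule sum.swap)
  also have "\<dots> = (\<Sum>j\<in>I. phi (q j) * v j * u j)"
    by (rule sum.cong[OF refl]) (use mu_pos in \<open>simp add: uleft\<close>)
  also have "\<dots> = Efun N u v p" by (simp add: Efun_def I_def q_def c_def)
  finally show "Efun N u v (WF_apply N s p) \<le> Efun N u v p" .
qed
theorem mainTheorem10:
  fixes N :: nat and s u v p :: "nat \<Rightarrow> real" and mu :: real
  assumes N2: "N \<ge> 2"
    and s0: "s 0 = 0" and sN: "s N = 1"
    and sint: "\<forall>j. 1 \<le> j \<and> j \<le> N - 1 \<longrightarrow> 0 < s j \<and> s j < 1"
    and mu_pos: "mu > 0"
    and u_pos: "\<forall>i. 1 \<le> i \<and> i \<le> N - 1 \<longrightarrow> u i > 0"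
    and v_pos: "\<forall>i. 1 \<le> i \<and> i \<le> N - 1 \<longrightarrow> v i > 0"
    and u_left: "\<forall>j. 1 \<le> j \<and> j \<le> N - 1 \<longrightarrow>
                   (\<Sum>i = 1..N-1. u i * WF_entry N s i j) = mu * u j"
    and v_right: "\<forall>i. 1 \<le> i \<and> i \<le> N - 1 \<longrightarrow>
                   (\<Sum>j = 1..N-1. WF_entry N s i j * v j) = mu * v i"
    and v_norm: "(\<Sum>i = 1..N-1. v i) = 1"
    and uv_norm: "(\<Sum>i = 1..N-1. u i * v i) = 1"
    and p_simplex: "p \<in> simplex N"
    and p_pos: "upair N u p > 0"
  shows "Efun N u v (WF_apply N s p) \<le> Efun N u v p
         \<and> decseq (\<lambda>n. Efun N u v ((WF_apply N s ^^ n) p))"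
proof -
  note hyps = N2 s0 sN sint mu_pos u_pos v_pos u_left v_right
  have p_nn: "\<forall>i\<le>N. 0 \<le> p i" using p_simplex by (simp add: simplex_def)
  have inv: "(\<forall>i\<le>N. 0 \<le> (WF_apply N s ^^ n) p i) \<and> upair N u ((WF_apply N s ^^ n) p) > 0" for n
  proof (induction n)
    case 0 thus ?case using p_nn p_pos by simp
  next
    case (Suc n)
    hence a: "\<forall>i\<le>N. 0 \<le> (WF_apply N s ^^ n) p i" and b: "upair N u ((WF_apply N s ^^ n) p) > 0" by auto
    show ?case using step(2,3)[OF hyps a b] b mu_pos by simp
  qed
  have "decseq (\<lambda>n. Efun N u v ((WF_apply N s ^^ n) p))"
  proof (rule decseq_SucI)
    fix n
    show "Efun N u v ((WF_apply N s ^^ Suc n) p) \<le> Efun N u v ((WF_apply N s ^^ n) p)"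
      using step(1)[OF hyps conjunct1[OF inv[of n]] conjunct2[OF inv[of n]]] by simp
  qed
  moreover have "Efun N u v (WF_apply N s p) \<le> Efun N u v p" using step(1)[OF hyps p_nn p_pos] .
  ultimately show ?thesis by simp
qed

end
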